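(* For all $\tau\in[-1,1)$, $P_u(\tau)>0$.
   Context: $P_u(\tau)=\sum_{k=0}^{22}c_k\tau^k$ with $(c_0,\dots,c_{22})=\bigl(\tfrac{335867}{539062},\tfrac{419712}{989125},-\tfrac{352463}{3539236},\tfrac{60789}{1703279},-\tfrac{132842}{11825541},\tfrac{43961}{54574472},\tfrac{39599}{12036926},-\tfrac{213665}{48625258},\tfrac{61644}{14973337},-\tfrac{107283}{33444500},\tfrac{44761}{18892011},-\tfrac{28249}{13550715},\tfrac{20641}{14839893},\tfrac{13459}{92774551},-\tfrac{4992}{34838093},-\tfrac{11771}{8149937},\tfrac{24115}{27631671},\tfrac{42106}{39550107},-\tfrac{21163}{32637441},-\tfrac{9782}{15918509},\tfrac{11581}{32652169},\tfrac{14692}{88640147},-\tfrac{12278}{123249611}\bigr)$. *)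

theory Defs
  imports Complex_Main
begin

definition Pu_coeffs :: "real list" where
  "Pu_coeffs = [335867/539062, 419712/989125, -352463/3539236, 60789/1703279,
    -132842/11825541, 43961/54574472, 39599/12036926, -213665/48625258,
    61644/14973337, -107283/33444500, 44761/18892011, -28249/13550715,
    20641/14839893, 13459/92774551, -4992/34838093, -11771/8149937,
    24115/27631671, 42106/39550107, -21163/32637441, -9782/15918509,
    11581/32652169, 14692/88640147, -12278/123249611]"

definition P_u :: "real \<Rightarrow> real" where
  "P_u \<tau> = (\<Sum>k\<le>22. Pu_coeffs ! k * \<tau> ^ k)"

end

theory Submission
  imports Defs
begin

lemma cubic_id:
  fixes c1 c2 c3 t :: real
  shows "c1*t+c2*t^2+c3*t^3 - (-c1+c2-c3) =
     (t+1)*((c1-2*c2+3*c3) + (c2-3*c3)*(t+1)) + c3*(t+1)^3"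
  by (simp add: algebra_simps power2_eq_square power3_eq_cube)

lemma term_bound:
  fixes c t :: real
  assumes "\<bar>t\<bar> \<le> 1"
  shows "c * t ^ k \<ge> - \<bar>c\<bar>"
proof -
  have "\<bar>t ^ k\<bar> \<le> 1" using assms by (simp add: power_abs power_le_one)
  hence "\<bar>c * t ^ k\<bar> \<le> \<bar>c\<bar>" by (simp add: abs_mult mult_left_le)
  thus ?thesis by linarith
qed

theorem lemma5p2:
  fixes \<tau> :: real
  assumes "-1 \<le> \<tau>" and "\<tau> < 1"
  shows "P_u \<tau> > 0"
proof -
  define f where "f k = Pu_coeffs ! k * \<tau> ^ k" for k
  have ab: "\<bar>\<tau>\<bar> \<le> 1" using assms by auto
  have split: "{..22::nat} = {..3} \<union> {4..22}" by auto
  have "P_u \<tau> = (\<Sum>k\<le>3. f k) + (\<Sum>k\<in>{4..22}. f k)"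
    unfolding P_u_def f_def split by (subst sum.union_disjoint) auto
  moreover have "(\<Sum>k\<in>{4..22}. f k) \<ge> (\<Sum>k\<in>{4..22}. - \<bar>Pu_coeffs ! k\<bar>)"
    unfolding f_def by (rule sum_mono) (rule term_bound[OF ab])
  moreover have "(\<Sum>k\<in>{4..22::nat}. - \<bar>Pu_coeffs ! k\<bar>) > - (4/100::real)"
    by (simp add: Pu_coeffs_def numeral_eq_Suc)
  moreover have "(\<Sum>k\<le>3. f k) \<ge> 6/100"
  proof -
    define s where "s = \<tau> + 1"
    have s0: "0 \<le> s" "s \<le> 2" using assms s_def by auto
    have "(\<Sum>k\<le>3. f k) = 335867/539062 + (419712/989125)*\<tau> + (-352463/3539236)*\<tau>^2 + (60789/1703279)*\<tau>^3"
      by (simp add: f_def Pu_coeffs_def numeral_eq_Suc)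
    also have "\<dots> = 335867/539062 + (-(419712/989125)+(-352463/3539236)-(60789/1703279))
       + ((419712/989125)*\<tau> + (-352463/3539236)*\<tau>^2 + (60789/1703279)*\<tau>^3 - (-(419712/989125)+(-352463/3539236)-(60789/1703279)))"
      by simp
    also have "\<dots> = 335867/539062 + (-(419712/989125)+(-352463/3539236)-(60789/1703279))
       + (s*(((419712/989125)-2*(-352463/3539236)+3*(60789/1703279)) + ((-352463/3539236)-3*(60789/1703279))*s) + (60789/1703279)*s^3)"
      unfolding s_def by (subst cubic_id) simp
    also have "\<dots> \<ge> 6/100"
    proof -
      have "0 \<le> (((419712/989125)-2*(-352463/3539236)+3*(60789/1703279)) + ((-352463/3539236)-3*(60789/1703279))*s)"
        using s0 by simp
      hence A: "0 \<le> s*(((419712/989125)-2*(-352463/3539236)+3*(60789/1703279)) + ((-352463/3539236)-3*(60789/1703279))*s)"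
        using s0 by simp
      moreover have B: "0 \<le> (60789/1703279::real)*s^3" using s0 by simp
      ultimately show ?thesis by linarith
    qed
    finally show ?thesis .
  qed
  ultimately show ?thesis by linarith
qed

end
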